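(* Let $\alpha$ be a composition of $n$ and let $D=S_{\omega(\alpha)}\subseteq[n-1]$. Then for each $i\ge 0$, $$\hat L_\alpha^{(i)}=\sum_{E\subseteq[n+i-1]}|T(D,E)|\,L_{\omega(\mathcal C(E))}.$$
   Context: For a composition $\alpha=(\alpha_1,\dots,\alpha_k)$ of $n$, $S_\alpha=\{\alpha_1,\alpha_1+\alpha_2,\dots,\alpha_1+\dots+\alpha_{k-1}\}\subseteq[n-1]$; for $E=\{e_1<\dots<e_k\}\subseteq[m-1]$, $\mathcal C(E)=(e_1,e_2-e_1,\dots,m-e_k)$, a composition of $m$. $\mathrm{rev}(\alpha)=(\alpha_k,\dots,\alpha_1)$ and $\omega(\alpha)$ is the composition of $n$ with $S_{\omega(\alpha)}=[n-1]\setminus S_{\mathrm{rev}(\alpha)}$. $L_\beta$ is the fundamental quasisymmetric function: for $\beta$ a composition of $m$, $L_\beta=\sum x_{i_1}\cdots x_{i_m}$ over $i_1\le\dots\le i_m$ with $i_j<i_{j+1}$ whenever $j\in S_\beta$. $\hat L_\alpha=\sum x^\sigma$, summed over all sequences $(\sigma_1,\dots,\sigma_n)$ of nonempty finite multisets of positive integers with $\max\sigma_j\le\min\sigma_{j+1}$ for all $j$ and $\max\sigma_j<\min\sigma_{j+1}$ when $j\in S_\alpha$, where $x^\sigma=\prod_r x_r^{(\text{total multiplicity of } r \text{ in } \sigma_1,\dots,\sigma_n)}$. $\hat L_\alpha^{(i)}$ denotes the homogeneous component of $\hat L_\alpha$ of degree $n+i$. For $D\subseteq[n-1]$ and $E\subseteq[n+i-1]$,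 an $i$-extension of $D$ to $E$ is an injective order-preserving map $t:[n-1]\to[n+i-1]$ with $t(D)\subseteq E$ and $E\setminus t(D)=[n+i-1]\setminus t([n-1])$; $T(D,E)$ is the set of $i$-extensions of $D$ to $E$. *)

theory Defs
  imports Main "HOL-Library.Multiset" "HOL-Library.FuncSet"
begin

text \<open>Monomials in the variables
x_1, x_2, ... are represented by multisets of positive naturals (the multiset of
variable indices, with multiplicity = exponent). A (homogeneous component of a)
formal power series is represented by its coefficient function on monomials.\<close>

definition is_composition :: "nat list \<Rightarrow> bool" where
  "is_composition \<alpha> \<longleftrightarrow> (\<forall>a \<in> set \<alpha>. 0 < a)"

definition Sset :: "nat list \<Rightarrow> nat set" where
  "Sset \<alpha> = {sum_list (take k \<alpha>) | k. 1 \<le> k \<and> k < length \<alpha>}"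

definition Ccomp :: "nat \<Rightarrow> nat set \<Rightarrow> nat list" where
  "Ccomp m E = (let ps = 0 # sorted_list_of_set E @ [m]
                in map (\<lambda>k. ps ! (k+1) - ps ! k) [0..<card E + 1])"

definition omega :: "nat list \<Rightarrow> nat list" where
  "omega \<alpha> = Ccomp (sum_list \<alpha>) ({1..sum_list \<alpha> - 1} - Sset (rev \<alpha>))"

text \<open>Coefficient of the monomial M in the fundamental quasisymmetric function L_beta.
Sequences (i_1,...,i_m) are lists; position j (1-based) corresponds to index j-1.\<close>
definition Lcoeff :: "nat list \<Rightarrow> nat multiset \<Rightarrow> nat" where
  "Lcoeff \<beta> M = card {is :: nat list.
      length is = sum_list \<beta> \<and> (\<forall>x \<in> set is. 0 < x) \<and>
      (\<forall>j. 1 \<le> j \<and> j < sum_list \<beta> \<longrightarrow>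
         is ! (j-1) \<le> is ! j \<and> (j \<in> Sset \<beta> \<longrightarrow> is ! (j-1) < is ! j)) \<and>
      mset is = M}"

text \<open>Coefficient of the monomial M in hat L_alpha^{(i)}, the homogeneous
component of degree n+i of hat L_alpha (n = |alpha|). Sequences
(sigma_1,...,sigma_n) of nonempty finite multisets are lists of length n;
x^sigma corresponds to the multiset sum of the sigma_j.\<close>
definition hatLcoeff :: "nat list \<Rightarrow> nat \<Rightarrow> nat multiset \<Rightarrow> nat" where
  "hatLcoeff \<alpha> i M =
     (if size M = sum_list \<alpha> + i then
        card {\<sigma> :: nat multiset list.
           length \<sigma> = sum_list \<alpha> \<and>
           (\<forall>s \<in> set \<sigma>. s \<noteq> {#} \<and> (\<forall>x \<in># s. 0 < x)) \<and>
           (\<forall>j. 1 \<le> j \<and> j < sum_list \<alpha> \<longrightarrow>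
              Max (set_mset (\<sigma> ! (j-1))) \<le> Min (set_mset (\<sigma> ! j)) \<and>
              (j \<in> Sset \<alpha> \<longrightarrow> Max (set_mset (\<sigma> ! (j-1))) < Min (set_mset (\<sigma> ! j)))) \<and>
           sum_list \<sigma> = M}
      else 0)"

text \<open>T(D,E): i-extensions of D \<subseteq> [n-1] to E \<subseteq> [n+i-1]; maps are
represented as extensional functions on [n-1].\<close>
definition Text :: "nat \<Rightarrow> nat \<Rightarrow> nat set \<Rightarrow> nat set \<Rightarrow> (nat \<Rightarrow> nat) set" where
  "Text n i D E = {t. t \<in> {1..n-1} \<rightarrow>\<^sub>E {1..n+i-1} \<and>
      strict_mono_on {1..n-1} t \<and> t ` D \<subseteq> E \<and>
      E - t ` D = {1..n+i-1} - t ` {1..n-1}}"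

end

theory Submission
  imports Defs
begin


lemma telescope0:
  fixes f :: "nat \<Rightarrow> nat"
  assumes "\<And>j. j < k \<Longrightarrow> f j \<le> f (Suc j)"
  shows "(\<Sum>j<k. f (Suc j) - f j) + f 0 = f k"
  using assms
proof (induction k)
  case 0 then show ?case by simp
next
  case (Suc k)
  have h: "(\<Sum>j<k. f (Suc j) - f j) + f 0 = f k" using Suc.IH Suc.prems by simp
  have "f k \<le> f (Suc k)" using Suc.prems by simp
  then show ?case using h by simp
qed

lemma telescope:
  fixes f :: "nat \<Rightarrow> nat"
  assumes "\<And>j. j < k \<Longrightarrow> f j \<le> f (Suc j)"
  shows "(\<Sum>j<k. f (Suc j) - f j) = f k - f 0"
  using telescope0[of k f] assms by (metis add_diff_cancel_right')

lemma sorted_Min: "sorted xs \<Longrightarrow> xs \<noteq> [] \<Longrightarrow> Min (set xs) = xs ! 0"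
  by (cases xs) (auto intro!: Min_eqI)

lemma sorted_Max: "sorted xs \<Longrightarrow> xs \<noteq> [] \<Longrightarrow> Max (set xs) = last xs"
proof -
  assume s: "sorted xs" and ne: "xs \<noteq> []"
  have "\<forall>y\<in>set xs. y \<le> last xs"
    using s ne by (auto simp: in_set_conv_nth last_conv_nth sorted_iff_nth_mono)
  then show ?thesis using ne by (auto intro!: Max_eqI)
qed

lemma sorted_concat:
  assumes "\<forall>xs\<in>set xss. sorted xs \<and> xs \<noteq> []"
    and "\<forall>j. Suc j < length xss \<longrightarrow> (\<forall>x\<in>set (xss!j). \<forall>y\<in>set (xss!Suc j). x \<le> y)"
  shows "sorted (concat xss)"
  using assms
proof (induction xss)
  case Nil then show ?case by simp
next
  case (Cons xs xss)
  have IH: "sorted (concat xss)"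
    using Cons.IH Cons.prems by fastforce
  show ?case
  proof (cases xss)
    case Nil then show ?thesis using Cons.prems by simp
  next
    case (Cons ys yss)
    have ys: "ys \<noteq> []" "sorted ys" using Cons \<open>\<forall>xs\<in>set (xs # xss). sorted xs \<and> xs \<noteq> []\<close> by auto
    have "\<forall>x\<in>set xs. x \<le> hd ys" using Cons.prems(2)[rule_format, of 0] ys Cons by (simp add: hd_in_set)
    moreover have "\<forall>y\<in>set (concat xss). hd ys \<le> y"
    proof
      fix y assume "y \<in> set (concat xss)"
      moreover have "concat xss \<noteq> []" "hd (concat xss) = hd ys" using ys Cons by auto
      ultimately show "hd ys \<le> y" using IH
        by (metis list.collapse sorted_simps(2) order.refl set_ConsD)
    qed
    ultimately show ?thesis using IH Cons.prems(1) by (auto simp: sorted_append intro: order.trans)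
  qed
qed

lemma drop_concat_len:
  "j \<le> length xss \<Longrightarrow> drop (sum_list (map length (take j xss))) (concat xss) = concat (drop j xss)"
proof (induction xss arbitrary: j)
  case Nil then show ?case by simp
next
  case (Cons xs xss) then show ?case by (cases j) auto
qed

definition sl :: "nat \<Rightarrow> nat \<Rightarrow> 'a list \<Rightarrow> 'a list" where
  "sl a b w = take (b - a) (drop a w)"

lemma sl_length: "b \<le> length w \<Longrightarrow> length (sl a b w) = b - a"
  by (simp add: sl_def)

lemma sl_nth: "a \<le> b \<Longrightarrow> b \<le> length w \<Longrightarrow> k < b - a \<Longrightarrow> sl a b w ! k = w ! (a + k)"
  by (simp add: sl_def)

lemma sl_sorted: "sorted w \<Longrightarrow> sorted (sl a b w)"
  by (simp add: sl_def sorted_wrt_take sorted_wrt_drop)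

lemma sl_Min: "sorted w \<Longrightarrow> a < b \<Longrightarrow> b \<le> length w \<Longrightarrow> Min (set (sl a b w)) = w ! a"
  by (subst sorted_Min) (auto simp: sl_sorted sl_def)

lemma sl_Max: "sorted w \<Longrightarrow> a < b \<Longrightarrow> b \<le> length w \<Longrightarrow> Max (set (sl a b w)) = w ! (b - 1)"
proof -
  assume "sorted w" "a < b" "b \<le> length w"
  moreover have "sl a b w \<noteq> []" using calculation by (simp add: sl_def)
  moreover have "last (sl a b w) = w ! (b - 1)"
    using calculation by (simp add: last_conv_nth sl_nth sl_length)
  ultimately show ?thesis by (simp add: sorted_Max sl_sorted)
qed

lemma sl_set: "x \<in> set (sl a b w) \<Longrightarrow> x \<in> set w"
  by (auto simp: sl_def dest: in_set_takeD in_set_dropD)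

lemma concat_sl:
  assumes "\<And>j. j < k \<Longrightarrow> q j \<le> q (Suc j)" "q 0 = 0"
  shows "concat (map (\<lambda>j. sl (q j) (q (Suc j)) w) [0..<k]) = take (q k) w"
  using assms
proof (induction k)
  case 0 then show ?case by simp
next
  case (Suc k)
  have "take (q (Suc k)) w = take (q k + (q (Suc k) - q k)) w" using Suc.prems by simp
  also have "\<dots> = take (q k) w @ sl (q k) (q (Suc k)) w" by (simp only: take_add sl_def)
  finally show ?case using Suc by simp
qed



lemma sum_take_rev:
  fixes xs :: "nat list"
  assumes "k \<le> length xs"
  shows "sum_list (take k (rev xs)) = sum_list xs - sum_list (take (length xs - k) xs)"
proof -
  have "take k (rev xs) = rev (drop (length xs - k) xs)" using assms by (simp add: take_rev)
  moreover have "sum_list xs = sum_list (take (length xs - k) xs) + sum_list (drop (length xs - k) xs)"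
    by (metis append_take_drop_id sum_list_append)
  ultimately show ?thesis by simp
qed

lemma Sset_rev: "Sset (rev xs) = (\<lambda>s. sum_list xs - s) ` Sset xs"
proof
  show "Sset (rev xs) \<subseteq> (\<lambda>s. sum_list xs - s) ` Sset xs"
  proof
    fix x assume "x \<in> Sset (rev xs)"
    then obtain k where k: "1 \<le> k" "k < length xs" "x = sum_list (take k (rev xs))"
      by (auto simp: Sset_def)
    then have "x = sum_list xs - sum_list (take (length xs - k) xs)" by (simp add: sum_take_rev)
    moreover have "sum_list (take (length xs - k) xs) \<in> Sset xs"
      unfolding Sset_def using k by (intro CollectI exI[of _ "length xs - k"]) auto
    ultimately show "x \<in> (\<lambda>s. sum_list xs - s) ` Sset xs" by blast
  qed
next
  show "(\<lambda>s. sum_list xs - s) ` Sset xs \<subseteq> Sset (rev xs)"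
  proof
    fix x assume "x \<in> (\<lambda>s. sum_list xs - s) ` Sset xs"
    then obtain k where k: "1 \<le> k" "k < length xs" "x = sum_list xs - sum_list (take k xs)"
      by (auto simp: Sset_def)
    then have "x = sum_list (take (length xs - k) (rev xs))" by (simp add: sum_take_rev)
    then show "x \<in> Sset (rev xs)"
      unfolding Sset_def using k by (intro CollectI exI[of _ "length xs - k"]) auto
  qed
qed

lemma Sset_bound:
  assumes "is_composition xs"
  shows "Sset xs \<subseteq> {1..sum_list xs - 1}"
proof
  fix x assume "x \<in> Sset xs"
  then obtain k where k: "1 \<le> k" "k < length xs" "x = sum_list (take k xs)"
    by (auto simp: Sset_def)
  have pos: "\<forall>a\<in>set xs. 0 < a" using assms by (simp add: is_composition_def)
  have "xs ! 0 \<in> set (take k xs)" using k by (metis Cons_nth_drop_Suc One_nat_def le_less_trans length_greater_0_conv less_numeral_extra(1) list.set_intros(1) list.size(3) nat_less_le take_Suc_Cons take_eq_Nil2 in_set_takeD hd_conv_nth hd_take hd_in_set take_eq_Nil neq0_conv not_one_le_zero)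
  then have "xs ! 0 \<le> x" using k by (simp add: member_le_sum_list)
  moreover have "xs ! 0 \<in> set xs" by (rule nth_mem) (use k in linarith)
  then have "xs ! 0 > 0" using pos by blast
  moreover have "xs ! k \<in> set (drop k xs)" using k by (metis Cons_nth_drop_Suc list.set_intros(1))
  then have "xs ! k \<le> sum_list (drop k xs)" by (simp add: member_le_sum_list)
  moreover have "xs ! k > 0" using pos k by simp
  moreover have "sum_list xs = x + sum_list (drop k xs)" using k
    by (metis append_take_drop_id sum_list_append)
  ultimately show "x \<in> {1..sum_list xs - 1}" by simp
qed

lemma Ccomp_props:
  assumes "E \<subseteq> {1..m-1}"
  shows "sum_list (Ccomp m E) = m" "Sset (Ccomp m E) = E"
proof -
  have fin: "finite E" using assms finite_subset by blast
  define xs where "xs = sorted_list_of_set E"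
  define c where "c = card E"
  define ps where "ps = 0 # xs @ [m]"
  have lxs: "length xs = c" by (simp add: xs_def c_def)
  have sxs: "sorted xs" by (simp add: xs_def)
  have setxs: "set xs = E" using fin by (simp add: xs_def)
  have lps: "length ps = c + 2" by (simp add: ps_def lxs)
  have "\<forall>x\<in>set xs. x \<le> m"
  proof
    fix x assume "x \<in> set xs"
    then have "x \<in> {1..m-1}" using setxs assms by blast
    then show "x \<le> m" by (simp del: One_nat_def, linarith)
  qed
  then have sps: "sorted ps" unfolding ps_def using sxs by (simp add: sorted_append)
  have C: "Ccomp m E = map (\<lambda>k. ps ! (k+1) - ps ! k) [0..<c + 1]"
    by (simp add: Ccomp_def ps_def xs_def c_def Let_def)
  have mono: "\<And>j. j < k \<Longrightarrow> k \<le> c + 1 \<Longrightarrow> ps ! j \<le> ps ! Suc j" for k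
    using sps lps by (simp add: sorted_iff_nth_Suc)
  have tk: "sum_list (take k (Ccomp m E)) = ps ! k" if "k \<le> c + 1" for k
  proof -
    have "take k (Ccomp m E) = map (\<lambda>k. ps ! (k+1) - ps ! k) [0..<k]"
      using that by (simp add: C take_map del: upt_Suc)
    moreover have "sum_list (map (\<lambda>k. ps ! (k+1) - ps ! k) [0..<k]) = (\<Sum>j\<in>set [0..<k]. ps ! (j+1) - ps ! j)"
      by (rule sum_set_upt_conv_sum_list_nat[symmetric])
    moreover have "set [0..<k] = {..<k}" by auto
    ultimately have "sum_list (take k (Ccomp m E)) = (\<Sum>j<k. ps ! (Suc j) - ps ! j)"
      by simp
    also have "\<dots> = ps ! k - ps ! 0" using mono that by (intro telescope) auto
    finally show ?thesis by (simp add: ps_def)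
  qed
  have "sum_list (Ccomp m E) = ps ! (c+1)" using tk[of "c+1"] by (simp add: C)
  then show "sum_list (Ccomp m E) = m" by (simp add: ps_def lxs nth_append)
  have lC: "length (Ccomp m E) = c+1" by (simp add: C)
  have pk: "\<And>k. 1 \<le> k \<Longrightarrow> k < c + 1 \<Longrightarrow> ps ! k = xs ! (k - 1)"
  proof -
    fix k :: nat assume "1 \<le> k" "k < c + 1"
    then obtain k' where "k = Suc k'" "k' < c" by (cases k) auto
    then show "ps ! k = xs ! (k - 1)" by (simp add: ps_def nth_append lxs)
  qed
  have "Sset (Ccomp m E) \<subseteq> E"
  proof
    fix x assume "x \<in> Sset (Ccomp m E)"
    then obtain k where k: "1 \<le> k" "k < c + 1" "x = sum_list (take k (Ccomp m E))"
      by (auto simp: Sset_def lC)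
    then have "x = xs ! (k - 1)" using tk pk by simp
    moreover have "k - 1 < length xs" using k lxs by simp
    ultimately show "x \<in> E" using setxs nth_mem by blast
  qed
  moreover have "E \<subseteq> Sset (Ccomp m E)"
  proof
    fix x assume "x \<in> E"
    then obtain j where j: "j < c" "x = xs ! j" using setxs lxs by (auto simp: in_set_conv_nth)
    then have "x = sum_list (take (Suc j) (Ccomp m E))" using tk pk by simp
    then show "x \<in> Sset (Ccomp m E)" unfolding Sset_def lC using j
      by (intro CollectI exI[of _ "Suc j"]) simp
  qed
  ultimately show "Sset (Ccomp m E) = E" by blast
qed

lemma omega_props:
  shows "sum_list (omega xs) = sum_list xs"
    "Sset (omega xs) = {1..sum_list xs - 1} - (\<lambda>s. sum_list xs - s) ` Sset xs"
proof -
  have sub: "{1..sum_list xs - 1} - Sset (rev xs) \<subseteq> {1..sum_list xs - 1}" by blast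
  show "sum_list (omega xs) = sum_list xs"
    unfolding omega_def by (rule Ccomp_props(1)[OF sub])
  show "Sset (omega xs) = {1..sum_list xs - 1} - (\<lambda>s. sum_list xs - s) ` Sset xs"
    unfolding omega_def Ccomp_props(2)[OF sub] by (simp only: Sset_rev)
qed



lemma sorted_eq_w:
  assumes "sorted xs" "mset xs = M"
  shows "xs = sorted_list_of_multiset M"
  using assms by (metis sorted_list_of_multiset_mset sorted_sort_id)

lemma Lcoeff_char:
  fixes M :: "nat multiset"
  assumes pos: "\<forall>x\<in>#M. 0 < x"
  defines "w \<equiv> sorted_list_of_multiset M"
  shows "Lcoeff \<beta> M = (if size M = sum_list \<beta> \<and>
     (\<forall>j. 1 \<le> j \<and> j < sum_list \<beta> \<and> j \<in> Sset \<beta> \<longrightarrow> w!(j-1) < w!j) then 1 else 0)"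
proof -
  let ?m = "sum_list \<beta>"
  let ?S = "{is :: nat list.
      length is = ?m \<and> (\<forall>x \<in> set is. 0 < x) \<and>
      (\<forall>j. 1 \<le> j \<and> j < ?m \<longrightarrow>
         is ! (j-1) \<le> is ! j \<and> (j \<in> Sset \<beta> \<longrightarrow> is ! (j-1) < is ! j)) \<and>
      mset is = M}"
  have Ldef: "Lcoeff \<beta> M = card ?S" by (simp add: Lcoeff_def)
  have sw: "sorted w" "mset w = M" "length w = size M" by (simp_all add: w_def, metis mset_sorted_list_of_multiset size_mset)
  have sub: "?S \<subseteq> {w}"
  proof
    fix xs assume xs: "xs \<in> ?S"
    have "sorted xs" unfolding sorted_iff_nth_Suc
    proof (intro allI impI)
      fix i assume "Suc i < length xs"
      then show "xs ! i \<le> xs ! Suc i" using xs by (auto dest!: spec[of _ "Suc i"])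
    qed
    then show "xs \<in> {w}" using xs sorted_eq_w w_def by auto
  qed
  show ?thesis
  proof (cases "size M = ?m \<and> (\<forall>j. 1 \<le> j \<and> j < ?m \<and> j \<in> Sset \<beta> \<longrightarrow> w!(j-1) < w!j)")
    case True
    have "w \<in> ?S"
    proof -
      have "\<forall>x\<in>set w. 0 < x" using pos sw by auto
      moreover have "\<forall>j. 1 \<le> j \<and> j < ?m \<longrightarrow> w ! (j-1) \<le> w ! j"
        using sw True by (auto simp: sorted_iff_nth_mono)
      ultimately show ?thesis using True sw by auto
    qed
    then have S1: "?S = {w}" using sub by blast
    show ?thesis unfolding if_P[OF True] Ldef S1 by simp
  next
    case False
    have "w \<notin> ?S" using False sw by auto
    then have S0: "?S = {}" using sub by blast
    show ?thesis unfolding if_not_P[OF False] Ldef S0 by (rule card.empty)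
  qed
qed



definition asc :: "nat list \<Rightarrow> nat \<Rightarrow> bool" where "asc w j \<longleftrightarrow> w!(j-1) < w!j"
definition CM :: "nat \<Rightarrow> nat \<Rightarrow> (nat \<Rightarrow> nat) set" where
  "CM n N = {t. t \<in> {1..n-1} \<rightarrow>\<^sub>E {1..N-1} \<and> strict_mono_on {1..n-1} t}"
definition rfl :: "nat \<Rightarrow> nat \<Rightarrow> (nat \<Rightarrow> nat) \<Rightarrow> nat \<Rightarrow> nat" where
  "rfl n N t = restrict (\<lambda>j. N - t (n - j)) {1..n-1}"

lemma finite_CM: "finite (CM n N)"
proof -
  have "CM n N \<subseteq> {1..n-1} \<rightarrow>\<^sub>E {1..N-1}" by (auto simp: CM_def)
  then show ?thesis by (rule finite_subset) (simp add: finite_PiE)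
qed

lemma rfl_CM: assumes "t \<in> CM n N" shows "rfl n N t \<in> CM n N"
proof -
  have t: "\<And>j. j \<in> {1..n-1} \<Longrightarrow> t j \<in> {1..N-1}" "strict_mono_on {1..n-1} t"
    using assms by (auto simp: CM_def)
  have "rfl n N t \<in> {1..n-1} \<rightarrow>\<^sub>E {1..N-1}"
  proof -
    have "\<And>j. j \<in> {1..n-1} \<Longrightarrow> N - t (n - j) \<in> {1..N-1}"
    proof -
      fix j assume "j \<in> {1..n-1}"
      then have "n - j \<in> {1..n-1}" by auto
      then have "t (n-j) \<in> {1..N-1}" by (rule t(1))
      then show "N - t (n - j) \<in> {1..N-1}" by auto
    qed
    then show ?thesis by (auto simp: rfl_def)
  qed
  moreover have "strict_mono_on {1..n-1} (rfl n N t)"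
  proof (rule strict_mono_onI)
    fix a b assume ab: "a \<in> {1..n-1}" "b \<in> {1..n-1}" "a < b"
    then have "n - b \<in> {1..n-1}" "n - a \<in> {1..n-1}" "n - b < n - a" by auto
    then have "t (n - b) < t (n - a)" "t (n-a) \<in> {1..N-1}" using t by (auto simp: strict_mono_on_def)
    then show "rfl n N t a < rfl n N t b" using ab by (auto simp: rfl_def)
  qed
  ultimately show ?thesis by (simp add: CM_def)
qed

lemma rfl_rfl: assumes "t \<in> CM n N" shows "rfl n N (rfl n N t) = t"
proof
  fix j
  have t: "\<And>j. j \<in> {1..n-1} \<Longrightarrow> t j \<in> {1..N-1}" "\<And>j. j \<notin> {1..n-1} \<Longrightarrow> t j = undefined"
    using assms by (auto simp: CM_def PiE_def extensional_def)
  show "rfl n N (rfl n N t) j = t j"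
  proof (cases "j \<in> {1..n-1}")
    case True
    then have "n - j \<in> {1..n-1}" "n - (n - j) = j" by auto
    then show ?thesis using True t(1)[OF True] by (auto simp: rfl_def)
  next
    case False
    have "rfl n N (rfl n N t) j = undefined" unfolding rfl_def[of n N "rfl n N t"] using False by (simp only: restrict_apply if_False)
    then show ?thesis using t(2)[OF False] by simp
  qed
qed

lemma card_refl:
  fixes P :: "nat \<Rightarrow> bool"
  shows "card {p \<in> CM n N. \<forall>j\<in>{1..n-1}. P j \<longrightarrow> Q (p j)}
       = card {t \<in> CM n N. \<forall>k\<in>{1..n-1}. P (n - k) \<longrightarrow> Q (N - t k)}"
proof (rule bij_betw_same_card[of "rfl n N"], rule bij_betw_byWitness[where f'="rfl n N"])
  let ?A = "{p \<in> CM n N. \<forall>j\<in>{1..n-1}. P j \<longrightarrow> Q (p j)}"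
  let ?B = "{t \<in> CM n N. \<forall>k\<in>{1..n-1}. P (n - k) \<longrightarrow> Q (N - t k)}"
  show "\<forall>a\<in>?A. rfl n N (rfl n N a) = a" using rfl_rfl by blast
  show "\<forall>a\<in>?B. rfl n N (rfl n N a) = a" using rfl_rfl by blast
  show "rfl n N ` ?A \<subseteq> ?B"
  proof (clarify, intro conjI)
    fix p assume p: "p \<in> CM n N" "\<forall>j\<in>{1..n-1}. P j \<longrightarrow> Q (p j)"
    show "rfl n N p \<in> CM n N" using rfl_CM p(1) .
    show "\<forall>k\<in>{1..n-1}. P (n - k) \<longrightarrow> Q (N - rfl n N p k)"
    proof (intro ballI impI)
      fix k assume k: "k \<in> {1..n-1}" "P (n - k)"
      then have nk: "n - k \<in> {1..n-1}" by auto
      then have "p (n - k) \<in> {1..N-1}" using p(1) by (auto simp: CM_def)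
      then have "N - rfl n N p k = p (n - k)" using k by (auto simp: rfl_def)
      then show "Q (N - rfl n N p k)" using p(2) nk k by auto
    qed
  qed
  show "rfl n N ` ?B \<subseteq> ?A"
  proof (clarify, intro conjI)
    fix t assume t: "t \<in> CM n N" "\<forall>k\<in>{1..n-1}. P (n - k) \<longrightarrow> Q (N - t k)"
    show "rfl n N t \<in> CM n N" using rfl_CM t(1) .
    show "\<forall>j\<in>{1..n-1}. P j \<longrightarrow> Q (rfl n N t j)"
    proof (intro ballI impI)
      fix j assume j: "j \<in> {1..n-1}" "P j"
      then have nj: "n - j \<in> {1..n-1}" "n - (n - j) = j" by auto
      then show "Q (rfl n N t j)" using t(2) j by (auto simp: rfl_def)
    qed
  qed
qed



lemma good_equiv:
  fixes n N :: nat and S D :: "nat set" and P :: "nat \<Rightarrow> bool"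
  assumes t: "t \<in> CM n N" and S: "S \<subseteq> {1..n-1}" and D: "D = {1..n-1} - (\<lambda>s. n - s) ` S"
  shows "(\<forall>j. 1 \<le> j \<and> j < N \<and> j \<in> {1..N-1} - (\<lambda>s. N - s) ` (t ` D \<union> ({1..N-1} - t ` {1..n-1})) \<longrightarrow> P j)
     \<longleftrightarrow> (\<forall>k\<in>{1..n-1}. n - k \<in> S \<longrightarrow> P (N - t k))" (is "?L \<longleftrightarrow> ?R")
proof -
  let ?Et = "t ` D \<union> ({1..N-1} - t ` {1..n-1})"
  have tv: "\<And>k. k \<in> {1..n-1} \<Longrightarrow> t k \<in> {1..N-1}" using t by (auto simp: CM_def)
  have inj: "inj_on t {1..n-1}" using t by (auto simp: CM_def intro: strict_mono_on_imp_inj_on)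
  have DS: "D \<subseteq> {1..n-1}" using D by blast
  have EtS: "?Et \<subseteq> {1..N-1}" using tv DS by blast
  show ?thesis
  proof
    assume L: ?L
    show ?R
    proof (intro ballI impI)
      fix k assume k: "k \<in> {1..n-1}" "n - k \<in> S"
      define j where "j = N - t k"
      have tk: "t k \<in> {1..N-1}" using tv k by blast
      then have j1: "1 \<le> j" "j < N" "j \<in> {1..N-1}" by (auto simp: j_def)
      have "j \<notin> (\<lambda>s. N - s) ` ?Et"
      proof
        assume "j \<in> (\<lambda>s. N - s) ` ?Et"
        then obtain e where e: "e \<in> ?Et" "j = N - e" by blast
        then have "e \<in> {1..N-1}" using EtS by blast
        then have "e = t k" using e(2) tk by (auto simp: j_def)
        then have "t k \<in> t ` D" using e(1) k by blast
        then obtain d where d: "d \<in> D" "t k = t d" by blast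
        then have "d = k" using inj DS k by (metis inj_onD subsetD)
        then have "k \<notin> (\<lambda>s. n - s) ` S" using d D by blast
        moreover have "k = n - (n - k)" using k by auto
        ultimately show False using k by blast
      qed
      then show "P (N - t k)" using L j1 by (auto simp: j_def)
    qed
  next
    assume R: ?R
    show ?L
    proof (intro allI impI)
      fix j assume j: "1 \<le> j \<and> j < N \<and> j \<in> {1..N-1} - (\<lambda>s. N - s) ` ?Et"
      define y where "y = N - j"
      have y: "y \<in> {1..N-1}" "j = N - y" using j by (auto simp: y_def)
      have "y \<notin> ?Et" using j y by blast
      then obtain k where k: "k \<in> {1..n-1}" "y = t k" "k \<notin> D" using y by blast
      then have "k \<in> (\<lambda>s. n - s) ` S" using D by blast
      then obtain s where s: "s \<in> S" "k = n - s" by blast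
      have "s \<in> {1..n-1}" using S s(1) by blast
      then have "n - k = s" using s(2) by auto
      then show "P j" using R k s y by auto
    qed
  qed
qed

lemma disj_key: "A \<inter> X = {} \<Longrightarrow> (A \<subseteq> E \<and> E - A = X) \<longleftrightarrow> (A \<union> X = E)" by blast

lemma sum_ind: "finite A \<Longrightarrow> (\<Sum>x\<in>A. if P x then 1 else 0 :: nat) = card {x\<in>A. P x}"
  by (simp add: sum.If_cases Int_def conj_commute)

lemma rhs_eq:
  fixes \<alpha> :: "nat list" and M :: "nat multiset"
  assumes comp: "is_composition \<alpha>" and pos: "\<forall>x\<in>#M. 0 < x"
    and sz: "size M = sum_list \<alpha> + i"
  shows "(\<Sum>E \<in> Pow {1..sum_list \<alpha> + i - 1}.
        card (Text (sum_list \<alpha>) i (Sset (omega \<alpha>)) E) * Lcoeff (omega (Ccomp (sum_list \<alpha> + i) E)) M)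
    = card {t \<in> CM (sum_list \<alpha>) (sum_list \<alpha> + i). \<forall>k\<in>{1..sum_list \<alpha>-1}. sum_list \<alpha> - k \<in> Sset \<alpha>
         \<longrightarrow> asc (sorted_list_of_multiset M) (sum_list \<alpha> + i - t k)}"
proof -
  define n where "n = sum_list \<alpha>"
  define N where "N = sum_list \<alpha> + i"
  define w where "w = sorted_list_of_multiset M"
  define D where "D = Sset (omega \<alpha>)"
  define S where "S = Sset \<alpha>"
  have S: "S \<subseteq> {1..n-1}" using Sset_bound[OF comp] by (simp add: S_def n_def)
  have Dd: "D = {1..n-1} - (\<lambda>s. n - s) ` S" by (simp add: D_def S_def n_def omega_props)
  define Et where "Et t = t ` D \<union> ({1..N-1} - t ` {1..n-1})" for t :: "nat \<Rightarrow> nat"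
  define good where "good E \<longleftrightarrow> (\<forall>j. 1 \<le> j \<and> j < N \<and> j \<in> {1..N-1} - (\<lambda>s. N - s) ` E \<longrightarrow> asc w j)" for E
  have T: "Text n i D E = {t\<in>CM n N. Et t = E}" for E
  proof -
    have NN: "n + i - 1 = N - 1" by (simp add: n_def N_def)
    have eq: "(t ` D \<subseteq> E \<and> E - t ` D = {1..N-1} - t ` {1..n-1}) \<longleftrightarrow> Et t = E" for t :: "nat \<Rightarrow> nat"
    proof -
      have "t ` D \<inter> ({1..N-1} - t ` {1..n-1}) = {}" using Dd by blast
      then show ?thesis unfolding Et_def by (rule disj_key)
    qed
    show ?thesis unfolding Text_def CM_def NN by (intro set_eqI) (simp only: mem_Collect_eq eq[symmetric] conj_assoc)
  qed
  have Lc: "Lcoeff (omega (Ccomp N E)) M = (if good E then 1 else 0)" if "E \<in> Pow {1..N-1}" for E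
  proof -
    have E: "E \<subseteq> {1..N-1}" using that by blast
    have s1: "sum_list (omega (Ccomp N E)) = N" by (simp add: omega_props Ccomp_props(1)[OF E])
    have s2: "Sset (omega (Ccomp N E)) = {1..N-1} - (\<lambda>s. N - s) ` E"
      by (simp add: omega_props Ccomp_props[OF E])
    show ?thesis unfolding Lcoeff_char[OF pos] s1 s2 good_def asc_def w_def
      using sz by (simp add: N_def)
  qed
  have "(\<Sum>E \<in> Pow {1..N-1}. card (Text n i D E) * Lcoeff (omega (Ccomp N E)) M)
      = (\<Sum>E \<in> Pow {1..N-1}. \<Sum>t\<in>{t\<in>CM n N. Et t = E}. if good (Et t) then 1 else 0)"
  proof (rule sum.cong[OF refl])
    fix E assume E: "E \<in> Pow {1..N-1}"
    have "(\<Sum>t\<in>{t\<in>CM n N. Et t = E}. if good (Et t) then 1 else 0)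
        = (\<Sum>t\<in>{t\<in>CM n N. Et t = E}. if good E then 1 else (0::nat))" by (rule sum.cong) auto
    also have "\<dots> = card (Text n i D E) * Lcoeff (omega (Ccomp N E)) M"
      using Lc[OF E] T by simp
    finally show "card (Text n i D E) * Lcoeff (omega (Ccomp N E)) M
       = (\<Sum>t\<in>{t\<in>CM n N. Et t = E}. if good (Et t) then 1 else 0)" by simp
  qed
  also have "\<dots> = (\<Sum>t\<in>CM n N. if good (Et t) then 1 else 0)"
  proof (rule sum.group[OF finite_CM])
    show "finite (Pow {1..N-1})" by simp
    show "Et ` CM n N \<subseteq> Pow {1..N-1}"
    proof
      fix E assume "E \<in> Et ` CM n N"
      then obtain t where t: "t \<in> CM n N" "E = Et t" by blast
      then have "t ` {1..n-1} \<subseteq> {1..N-1}" by (auto simp: CM_def)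
      moreover have "D \<subseteq> {1..n-1}" using Dd by blast
      ultimately show "E \<in> Pow {1..N-1}" using t by (auto simp: Et_def)
    qed
  qed
  also have "\<dots> = card {t\<in>CM n N. good (Et t)}" by (rule sum_ind[OF finite_CM])
  also have "{t\<in>CM n N. good (Et t)} = {t\<in>CM n N. \<forall>k\<in>{1..n-1}. n - k \<in> S \<longrightarrow> asc w (N - t k)}"
    unfolding good_def Et_def using good_equiv[OF _ S Dd] by blast
  finally show ?thesis by (simp add: n_def N_def w_def D_def S_def)
qed



lemma smono_upto:
  fixes q :: "nat \<Rightarrow> nat"
  assumes "\<And>j. j < n \<Longrightarrow> q j < q (Suc j)"
  shows "a < b \<Longrightarrow> b \<le> n \<Longrightarrow> q a < q b"
proof (induction b)
  case 0 then show ?case by simp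
next
  case (Suc b)
  have "q b < q (Suc b)" using assms Suc.prems by simp
  show ?case
  proof (cases "a < b")
    case True then show ?thesis using Suc \<open>q b < q (Suc b)\<close> by simp
  next
    case False then have "a = b" using Suc.prems by simp
    then show ?thesis using \<open>q b < q (Suc b)\<close> by simp
  qed
qed

lemma qfacts:
  fixes q :: "nat \<Rightarrow> nat" and w :: "nat list"
  assumes inc: "\<And>j. j < n \<Longrightarrow> q j < q (Suc j)" and qn: "q n = length w" and sw: "sorted w"
    and j: "j < n"
  shows "q (Suc j) \<le> length w" "sl (q j) (q (Suc j)) w \<noteq> []"
    "Min (set (sl (q j) (q (Suc j)) w)) = w ! q j"
    "Max (set (sl (q j) (q (Suc j)) w)) = w ! (q (Suc j) - 1)"
    "length (sl (q j) (q (Suc j)) w) = q (Suc j) - q j"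
proof -
  have l: "q (Suc j) \<le> length w"
  proof (cases "Suc j = n")
    case True then show ?thesis using qn by simp
  next
    case False then have "q (Suc j) < q n" using smono_upto[of n q "Suc j" n] inc j by simp
    then show ?thesis using qn by simp
  qed
  show "q (Suc j) \<le> length w" by (fact l)
  have lt: "q j < q (Suc j)" using inc j by simp
  show "length (sl (q j) (q (Suc j)) w) = q (Suc j) - q j" using l by (simp add: sl_length)
  then show "sl (q j) (q (Suc j)) w \<noteq> []" using lt by auto
  show "Min (set (sl (q j) (q (Suc j)) w)) = w ! q j" using sl_Min[OF sw lt l] .
  show "Max (set (sl (q j) (q (Suc j)) w)) = w ! (q (Suc j) - 1)" using sl_Max[OF sw lt l] .
qed

definition Qf :: "nat multiset list \<Rightarrow> nat \<Rightarrow> nat" where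
  "Qf \<sigma> j = sum_list (map size (take j \<sigma>))"

lemma Qf_0: "Qf \<sigma> 0 = 0" by (simp add: Qf_def)

lemma Qf_Suc: "j < length \<sigma> \<Longrightarrow> Qf \<sigma> (Suc j) = Qf \<sigma> j + size (\<sigma> ! j)"
  by (simp add: Qf_def take_Suc_conv_app_nth)

lemma size_sum_list_ms: "size (sum_list (xs :: 'a multiset list)) = sum_list (map size xs)"
  by (induction xs) auto

lemma Qf_len: "Qf \<sigma> (length \<sigma>) = size (sum_list \<sigma>)"
  by (simp add: Qf_def size_sum_list_ms)

lemma len_sl_ms: "length (sorted_list_of_multiset s) = size s"
  by (metis mset_sorted_list_of_multiset size_mset)

definition SG :: "nat list \<Rightarrow> nat multiset \<Rightarrow> nat multiset list set" where
  "SG \<alpha> M = {\<sigma> :: nat multiset list.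
           length \<sigma> = sum_list \<alpha> \<and>
           (\<forall>s \<in> set \<sigma>. s \<noteq> {#} \<and> (\<forall>x \<in># s. 0 < x)) \<and>
           (\<forall>j. 1 \<le> j \<and> j < sum_list \<alpha> \<longrightarrow>
              Max (set_mset (\<sigma> ! (j-1))) \<le> Min (set_mset (\<sigma> ! j)) \<and>
              (j \<in> Sset \<alpha> \<longrightarrow> Max (set_mset (\<sigma> ! (j-1))) < Min (set_mset (\<sigma> ! j)))) \<and>
           sum_list \<sigma> = M}"

lemma hat_SG: "hatLcoeff \<alpha> i M = (if size M = sum_list \<alpha> + i then card (SG \<alpha> M) else 0)"
  by (simp add: hatLcoeff_def SG_def)

lemma SG_slices:
  assumes s: "\<sigma> \<in> SG \<alpha> M" and j: "j < length \<sigma>"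
  shows "\<sigma> ! j = mset (sl (Qf \<sigma> j) (Qf \<sigma> (Suc j)) (sorted_list_of_multiset M))"
proof -
  define ls where "ls = map sorted_list_of_multiset \<sigma>"
  have ne: "\<forall>s\<in>set \<sigma>. s \<noteq> {#}" and sm: "sum_list \<sigma> = M" and len: "length \<sigma> = sum_list \<alpha>"
    and ch: "\<And>j. 1 \<le> j \<Longrightarrow> j < sum_list \<alpha> \<Longrightarrow> Max (set_mset (\<sigma> ! (j-1))) \<le> Min (set_mset (\<sigma> ! j))"
    using s by (auto simp: SG_def)
  have a: "\<forall>xs\<in>set ls. sorted xs \<and> xs \<noteq> []"
    using ne by (auto simp: ls_def) (metis mset_sorted_list_of_multiset mset.simps(1))
  have b: "\<forall>j. Suc j < length ls \<longrightarrow> (\<forall>x\<in>set (ls!j). \<forall>y\<in>set (ls!Suc j). x \<le> y)"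
  proof (intro allI impI ballI)
    fix j x y assume jl: "Suc j < length ls" and x: "x \<in> set (ls!j)" and y: "y \<in> set (ls!Suc j)"
    have x': "x \<in> set_mset (\<sigma>!j)" using x jl by (simp add: ls_def)
    have y': "y \<in> set_mset (\<sigma>!Suc j)" using y jl by (simp add: ls_def)
    have "Max (set_mset (\<sigma> ! j)) \<le> Min (set_mset (\<sigma> ! Suc j))"
      using ch[of "Suc j"] jl len by (simp add: ls_def)
    moreover have "x \<le> Max (set_mset (\<sigma> ! j))" using x' by simp
    moreover have "Min (set_mset (\<sigma> ! Suc j)) \<le> y" using y' by simp
    ultimately show "x \<le> y" by linarith
  qed
  have "sorted (concat ls)" by (rule sorted_concat[OF a b])
  moreover have "mset (concat ls) = M"
    using sm by (simp add: mset_concat ls_def map_map comp_def)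
  ultimately have cw: "concat ls = sorted_list_of_multiset M" by (rule sorted_eq_w)
  have Q: "Qf \<sigma> k = sum_list (map length (take k ls))" for k
    by (simp add: Qf_def ls_def take_map map_map comp_def len_sl_ms)
  have jl: "j < length ls" using j by (simp add: ls_def)
  have "drop (Qf \<sigma> j) (concat ls) = concat (drop j ls)"
    unfolding Q using jl by (intro drop_concat_len) simp
  also have "\<dots> = ls ! j @ concat (drop (Suc j) ls)"
    using jl by (simp add: Cons_nth_drop_Suc[symmetric])
  finally have dr: "drop (Qf \<sigma> j) (concat ls) = ls ! j @ concat (drop (Suc j) ls)" .
  have "Qf \<sigma> (Suc j) - Qf \<sigma> j = length (ls ! j)"
    using Qf_Suc[OF j] j by (simp add: ls_def len_sl_ms)
  then have "sl (Qf \<sigma> j) (Qf \<sigma> (Suc j)) (concat ls) = ls ! j"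
    unfolding sl_def dr by simp
  then show ?thesis using jl cw by (simp add: ls_def)
qed

lemma SG_q:
  assumes s: "\<sigma> \<in> SG \<alpha> M"
  shows "Qf \<sigma> 0 = 0" "Qf \<sigma> (sum_list \<alpha>) = size M" "\<And>j. j < sum_list \<alpha> \<Longrightarrow> Qf \<sigma> j < Qf \<sigma> (Suc j)"
proof -
  have ne: "\<forall>s\<in>set \<sigma>. s \<noteq> {#}" and sm: "sum_list \<sigma> = M" and len: "length \<sigma> = sum_list \<alpha>"
    using s by (auto simp: SG_def)
  show "Qf \<sigma> 0 = 0" by (rule Qf_0)
  show "Qf \<sigma> (sum_list \<alpha>) = size M" using Qf_len[of \<sigma>] len sm by simp
  fix j assume "j < sum_list \<alpha>"
  then have "j < length \<sigma>" using len by simp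
  moreover then have "size (\<sigma> ! j) > 0" using ne by (simp add: nonempty_has_size)
  ultimately show "Qf \<sigma> j < Qf \<sigma> (Suc j)" by (simp add: Qf_Suc)
qed



definition phi :: "nat \<Rightarrow> nat multiset list \<Rightarrow> nat \<Rightarrow> nat" where
  "phi n \<sigma> = restrict (Qf \<sigma>) {1..n-1}"
definition qq :: "nat \<Rightarrow> nat \<Rightarrow> (nat \<Rightarrow> nat) \<Rightarrow> nat \<Rightarrow> nat" where
  "qq n N p j = (if j = 0 then 0 else if j < n then p j else N)"
definition psi :: "nat \<Rightarrow> nat \<Rightarrow> nat list \<Rightarrow> (nat \<Rightarrow> nat) \<Rightarrow> nat multiset list" where
  "psi n N w p = map (\<lambda>j. mset (sl (qq n N p j) (qq n N p (Suc j)) w)) [0..<n]"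

lemma qq_props:
  assumes p: "p \<in> CM n N" and n: "1 \<le> n" and N: "1 \<le> N"
  shows "qq n N p 0 = 0" "qq n N p n = N" "\<And>j. j < n \<Longrightarrow> qq n N p j < qq n N p (Suc j)"
proof -
  have pv: "\<And>j. j \<in> {1..n-1} \<Longrightarrow> p j \<in> {1..N-1}" and sm: "strict_mono_on {1..n-1} p"
    using p by (auto simp: CM_def)
  show "qq n N p 0 = 0" by (simp add: qq_def)
  show "qq n N p n = N" using n by (simp add: qq_def)
  fix j assume j: "j < n"
  show "qq n N p j < qq n N p (Suc j)"
  proof (cases "j = 0")
    case True
    show ?thesis
    proof (cases "Suc j < n")
      case True
      then have "p (Suc j) \<in> {1..N-1}" using pv by auto
      then show ?thesis using True \<open>j = 0\<close> by (simp add: qq_def)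
    next
      case False then show ?thesis using \<open>j = 0\<close> N by (simp add: qq_def)
    qed
  next
    case False
    then have j1: "j \<in> {1..n-1}" using j by auto
    show ?thesis
    proof (cases "Suc j < n")
      case True
      then have "p j < p (Suc j)" using sm j1 by (auto simp: strict_mono_on_def)
      then show ?thesis using True False by (simp add: qq_def)
    next
      case c: False
      have "p j \<in> {1..N-1}" using pv j1 by blast
      then have "p j < N" using N by (simp, linarith)
      then show ?thesis using c False j by (simp add: qq_def)
    qed
  qed
qed

lemma lhs_eq:
  fixes \<alpha> :: "nat list" and M :: "nat multiset"
  assumes comp: "is_composition \<alpha>" and ne: "\<alpha> \<noteq> []" and pos: "\<forall>x\<in>#M. 0 < x"
    and sz: "size M = sum_list \<alpha> + i"
  shows "card (SG \<alpha> M) = card {p \<in> CM (sum_list \<alpha>) (sum_list \<alpha> + i).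
            \<forall>j\<in>{1..sum_list \<alpha> - 1}. j \<in> Sset \<alpha> \<longrightarrow> asc (sorted_list_of_multiset M) (p j)}"
proof -
  define n where "n = sum_list \<alpha>"
  define N where "N = sum_list \<alpha> + i"
  define w where "w = sorted_list_of_multiset M"
  define P where "P = {p \<in> CM n N. \<forall>j\<in>{1..n-1}. j \<in> Sset \<alpha> \<longrightarrow> asc w (p j)}"
  have n1: "1 \<le> n"
  proof -
    have "hd \<alpha> \<in> set \<alpha>" using ne by simp
    then have "0 < hd \<alpha>" "hd \<alpha> \<le> n" using comp by (auto simp: is_composition_def n_def member_le_sum_list)
    then show ?thesis by simp
  qed
  have N1: "1 \<le> N" using n1 by (simp add: n_def N_def)
  have sw: "sorted w" by (simp add: w_def)
  have lw: "length w = N" using sz by (simp add: w_def len_sl_ms N_def)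
  have setw: "set w = set_mset M" by (simp add: w_def)
  have "bij_betw (phi n) (SG \<alpha> M) P"
  proof (rule bij_betw_byWitness[where f'="psi n N w"])
    show "\<forall>\<sigma>\<in>SG \<alpha> M. psi n N w (phi n \<sigma>) = \<sigma>"
    proof
      fix \<sigma> assume s: "\<sigma> \<in> SG \<alpha> M"
      have len: "length \<sigma> = n" using s by (simp add: SG_def n_def)
      have qQ: "qq n N (phi n \<sigma>) j = Qf \<sigma> j" if "j \<le> n" for j
        using that SG_q[OF s] sz by (auto simp: qq_def phi_def Qf_0 n_def N_def)
      show "psi n N w (phi n \<sigma>) = \<sigma>"
      proof (rule nth_equalityI)
        show "length (psi n N w (phi n \<sigma>)) = length \<sigma>" using len by (simp add: psi_def)
        fix j assume "j < length (psi n N w (phi n \<sigma>))"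
        then have j: "j < n" by (simp add: psi_def)
        then show "psi n N w (phi n \<sigma>) ! j = \<sigma> ! j"
          using SG_slices[OF s, of j] len qQ by (simp add: psi_def w_def)
      qed
    qed
    show "\<forall>p\<in>P. phi n (psi n N w p) = p"
    proof
      fix p assume pP: "p \<in> P"
      then have p: "p \<in> CM n N" by (simp add: P_def)
      note qp = qq_props[OF p n1 N1]
      have lq: "qq n N p n = length w" using qp lw by simp
      show "phi n (psi n N w p) = p"
      proof
        fix j
        show "phi n (psi n N w p) j = p j"
        proof (cases "j \<in> {1..n-1}")
          case True
          then have jn: "j \<le> n" by auto
          have "take j (psi n N w p) = map (\<lambda>j. mset (sl (qq n N p j) (qq n N p (Suc j)) w)) [0..<j]"
            using jn by (simp add: psi_def take_map)
          then have "Qf (psi n N w p) j = sum_list (map (\<lambda>k. qq n N p (Suc k) - qq n N p k) [0..<j])"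
            unfolding Qf_def
          proof (simp add: map_map comp_def, intro arg_cong[where f=sum_list] map_cong refl)
            fix k assume "k \<in> set [0..<j]"
            then have "k < n" using jn by simp
            then show "length (sl (qq n N p k) (qq n N p (Suc k)) w) = qq n N p (Suc k) - qq n N p k"
              using qfacts(5)[OF qp(3) lq sw] by simp
          qed
          also have "\<dots> = (\<Sum>k\<in>set [0..<j]. qq n N p (Suc k) - qq n N p k)"
            by (rule sum_set_upt_conv_sum_list_nat[symmetric])
          also have "set [0..<j] = {..<j}" by auto
          also have "(\<Sum>k<j. qq n N p (Suc k) - qq n N p k) = qq n N p j - qq n N p 0"
            using qp(3) jn by (intro telescope) (simp add: less_imp_le)
          also have "\<dots> = p j" using True qp(1) by (auto simp: qq_def)
          finally show ?thesis using True by (simp add: phi_def)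
        next
          case False
          then show ?thesis using p by (auto simp: phi_def CM_def PiE_def extensional_def)
        qed
      qed
    qed
    show "phi n ` SG \<alpha> M \<subseteq> P"
    proof
      fix x assume "x \<in> phi n ` SG \<alpha> M"
      then obtain \<sigma> where s: "\<sigma> \<in> SG \<alpha> M" and x: "x = phi n \<sigma>" by blast
      have len: "length \<sigma> = n" using s by (simp add: SG_def n_def)
      note q = SG_q[OF s]
      have q0: "Qf \<sigma> 0 = 0" and qn: "Qf \<sigma> n = N" and qi: "\<And>j. j < n \<Longrightarrow> Qf \<sigma> j < Qf \<sigma> (Suc j)"
        using q sz by (auto simp: n_def N_def)
      have lq: "Qf \<sigma> n = length w" using qn lw by simp
      have rng: "Qf \<sigma> j \<in> {1..N-1}" if "j \<in> {1..n-1}" for j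
      proof -
        have "Qf \<sigma> 0 < Qf \<sigma> j" using smono_upto[of n "Qf \<sigma>" 0 j] qi that by auto
        moreover have "Qf \<sigma> j < Qf \<sigma> n" using smono_upto[of n "Qf \<sigma>" j n] qi that by auto
        ultimately show ?thesis using q0 qn by auto
      qed
      have "x \<in> CM n N"
      proof -
        have "x \<in> {1..n-1} \<rightarrow>\<^sub>E {1..N-1}" using rng by (simp add: x phi_def)
        moreover have "strict_mono_on {1..n-1} x"
        proof (rule strict_mono_onI)
          fix a b assume "a \<in> {1..n-1}" "b \<in> {1..n-1}" "a < b"
          then show "x a < x b" using smono_upto[of n "Qf \<sigma>" a b] qi by (auto simp: x phi_def)
        qed
        ultimately show ?thesis by (simp add: CM_def)
      qed
      moreover have "\<forall>j\<in>{1..n-1}. j \<in> Sset \<alpha> \<longrightarrow> asc w (x j)"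
      proof (intro ballI impI)
        fix j assume j: "j \<in> {1..n-1}" "j \<in> Sset \<alpha>"
        then have "Max (set_mset (\<sigma> ! (j-1))) < Min (set_mset (\<sigma> ! j))"
          using s by (auto simp: SG_def n_def)
        moreover have "\<sigma> ! (j-1) = mset (sl (Qf \<sigma> (j-1)) (Qf \<sigma> (Suc (j-1))) w)"
        proof -
          have "j - 1 < length \<sigma>" using j len by auto
          from SG_slices[OF s this] show ?thesis by (simp add: w_def)
        qed
        moreover have "\<sigma> ! j = mset (sl (Qf \<sigma> j) (Qf \<sigma> (Suc j)) w)"
        proof -
          have "j < length \<sigma>" using j len by auto
          from SG_slices[OF s this] show ?thesis by (simp add: w_def)
        qed
        moreover have "Max (set (sl (Qf \<sigma> (j-1)) (Qf \<sigma> (Suc (j-1))) w)) = w ! (Qf \<sigma> (Suc (j-1)) - 1)"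
        proof -
          have "j - 1 < n" using j by auto
          from qfacts(4)[OF qi lq sw this] show ?thesis .
        qed
        moreover have "Min (set (sl (Qf \<sigma> j) (Qf \<sigma> (Suc j)) w)) = w ! Qf \<sigma> j"
        proof -
          have "j < n" using j by auto
          from qfacts(3)[OF qi lq sw this] show ?thesis .
        qed
        moreover have "Suc (j-1) = j" using j by simp
        ultimately have "w ! (Qf \<sigma> j - 1) < w ! Qf \<sigma> j" by simp
        then show "asc w (x j)" using j by (simp add: asc_def x phi_def)
      qed
      ultimately show "x \<in> P" by (simp add: P_def)
    qed
    show "psi n N w ` P \<subseteq> SG \<alpha> M"
    proof
      fix y assume "y \<in> psi n N w ` P"
      then obtain p where pP: "p \<in> P" and y: "y = psi n N w p" by blast
      then have p: "p \<in> CM n N" by (simp add: P_def)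
      note qp = qq_props[OF p n1 N1]
      have lq: "qq n N p n = length w" using qp lw by simp
      let ?q = "qq n N p"
      have yj: "y ! j = mset (sl (?q j) (?q (Suc j)) w)" if "j < n" for j
        using that by (simp add: y psi_def)
      have leny: "length y = n" by (simp add: y psi_def)
      have A: "\<forall>s \<in> set y. s \<noteq> {#} \<and> (\<forall>x \<in># s. 0 < x)"
      proof
        fix s assume "s \<in> set y"
        then obtain j where j: "j < n" "s = y ! j" using leny by (auto simp: in_set_conv_nth)
        have "sl (?q j) (?q (Suc j)) w \<noteq> []" using qfacts(2)[OF qp(3) lq sw j(1)] .
        moreover have "\<forall>x\<in>set (sl (?q j) (?q (Suc j)) w). 0 < x"
        proof
          fix x assume "x \<in> set (sl (?q j) (?q (Suc j)) w)"
          then have "x \<in> set w" by (rule sl_set)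
          then have "x \<in># M" using setw by simp
          then show "0 < x" using pos by blast
        qed
        moreover have "s = mset (sl (?q j) (?q (Suc j)) w)" using j(2) yj[OF j(1)] by simp
        ultimately show "s \<noteq> {#} \<and> (\<forall>x \<in># s. 0 < x)" by simp
      qed
      have B: "\<forall>j. 1 \<le> j \<and> j < n \<longrightarrow>
              Max (set_mset (y ! (j-1))) \<le> Min (set_mset (y ! j)) \<and>
              (j \<in> Sset \<alpha> \<longrightarrow> Max (set_mset (y ! (j-1))) < Min (set_mset (y ! j)))"
      proof (intro allI impI)
        fix j assume j: "1 \<le> j \<and> j < n"
        have j1: "j - 1 < n" "j < n" "Suc (j - 1) = j" "j \<in> {1..n-1}" using j by (auto simp del: One_nat_def)
        have e1: "Max (set_mset (y ! (j-1))) = w ! (?q j - 1)"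
          using yj[OF j1(1)] qfacts(4)[OF qp(3) lq sw j1(1)] unfolding j1(3) by simp
        have e2: "Min (set_mset (y ! j)) = w ! ?q j"
          using yj[OF j1(2)] qfacts(3)[OF qp(3) lq sw j1(2)] by simp
        have qj: "?q j = p j" using j by (simp add: qq_def)
        have "p j \<in> {1..N-1}" using p j1(4) by (auto simp: CM_def)
        then have pjl: "p j - 1 \<le> p j" "p j < length w" using lw by auto
        have "w ! (?q j - 1) \<le> w ! ?q j" unfolding qj using sorted_nth_mono[OF sw pjl] .
        moreover have "j \<in> Sset \<alpha> \<Longrightarrow> w ! (?q j - 1) < w ! ?q j"
        proof -
          assume "j \<in> Sset \<alpha>"
          moreover have "\<forall>j\<in>{1..n-1}. j \<in> Sset \<alpha> \<longrightarrow> asc w (p j)" using pP by (simp add: P_def)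
          ultimately have "asc w (p j)" using j1(4) by blast
          then show ?thesis unfolding qj asc_def .
        qed
        ultimately show "Max (set_mset (y ! (j-1))) \<le> Min (set_mset (y ! j)) \<and>
              (j \<in> Sset \<alpha> \<longrightarrow> Max (set_mset (y ! (j-1))) < Min (set_mset (y ! j)))"
          using e1 e2 by simp
      qed
      have C: "sum_list y = M"
      proof -
        have "sum_list y = mset (concat (map (\<lambda>j. sl (?q j) (?q (Suc j)) w) [0..<n]))"
          by (simp add: y psi_def mset_concat map_map comp_def)
        also have "concat (map (\<lambda>j. sl (?q j) (?q (Suc j)) w) [0..<n]) = take (?q n) w"
          using qp by (intro concat_sl) (auto simp: less_imp_le)
        also have "take (?q n) w = w" using lq by simp
        finally show ?thesis by (simp add: w_def)
      qed
      show "y \<in> SG \<alpha> M" using A B C leny by (simp add: SG_def n_def)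
    qed
  qed
  then have "card (SG \<alpha> M) = card P" by (rule bij_betw_same_card)
  then show ?thesis by (simp add: P_def n_def N_def w_def)
qed


theorem mainTheorem3:
  fixes \<alpha> :: "nat list" and i :: nat and M :: "nat multiset"
  assumes "is_composition \<alpha>" and "\<alpha> \<noteq> []"
    and "\<forall>x \<in># M. 0 < x"
  shows "hatLcoeff \<alpha> i M =
    (\<Sum>E \<in> Pow {1..sum_list \<alpha> + i - 1}.
        card (Text (sum_list \<alpha>) i (Sset (omega \<alpha>)) E) * Lcoeff (omega (Ccomp (sum_list \<alpha> + i) E)) M)"
proof (cases "size M = sum_list \<alpha> + i")
  case True
  have "hatLcoeff \<alpha> i M = card (SG \<alpha> M)" using True by (simp add: hat_SG)
  also have "\<dots> = card {p \<in> CM (sum_list \<alpha>) (sum_list \<alpha> + i).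
            \<forall>j\<in>{1..sum_list \<alpha> - 1}. j \<in> Sset \<alpha> \<longrightarrow> asc (sorted_list_of_multiset M) (p j)}"
    by (rule lhs_eq[OF assms True])
  also have "\<dots> = card {t \<in> CM (sum_list \<alpha>) (sum_list \<alpha> + i). \<forall>k\<in>{1..sum_list \<alpha>-1}. sum_list \<alpha> - k \<in> Sset \<alpha>
         \<longrightarrow> asc (sorted_list_of_multiset M) (sum_list \<alpha> + i - t k)}"
    by (rule card_refl)
  also have "\<dots> = (\<Sum>E \<in> Pow {1..sum_list \<alpha> + i - 1}.
        card (Text (sum_list \<alpha>) i (Sset (omega \<alpha>)) E) * Lcoeff (omega (Ccomp (sum_list \<alpha> + i) E)) M)"
    by (rule rhs_eq[OF assms(1) assms(3) True, symmetric])
  finally show ?thesis .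
next
  case False
  have "hatLcoeff \<alpha> i M = 0" using False by (simp add: hat_SG)
  moreover have "Lcoeff (omega (Ccomp (sum_list \<alpha> + i) E)) M = 0"
    if "E \<in> Pow {1..sum_list \<alpha> + i - 1}" for E
  proof -
    have E: "E \<subseteq> {1..sum_list \<alpha> + i - 1}" using that by blast
    have "sum_list (omega (Ccomp (sum_list \<alpha> + i) E)) = sum_list \<alpha> + i"
      by (simp add: omega_props Ccomp_props(1)[OF E])
    then show ?thesis using False by (simp add: Lcoeff_char[OF assms(3)])
  qed
  ultimately show ?thesis by simp
qed

end
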